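(* Let $F=\breve F(\alpha_1,\dots,\alpha_t)$ be a fence with shared elements $s_1,\dots,s_{t-1}$. Then the set $X=\{\chi_{s_i}: 1\le i\le t-1\}$ is linearly independent and $\operatorname{Span}_{\mathbb R}(X)\cap A_T(F)=\{0\}$.
   Context: Fences: let $\alpha=(\alpha_1,\dots,\alpha_t)$ be positive integers with $t\ge2$ and $\alpha_1,\alpha_t\ge2$. Put $a_0=0$, $a_i=\alpha_1+\dots+\alpha_i$, $n=a_t-1$. The fence $\breve F(\alpha)$ is the poset on $\{x_1,\dots,x_n\}$ whose cover relations are: for $1\le j\le n-1$ with $a_{i-1}\le j<a_i$, $x_j\lessdot x_{j+1}$ if $i$ is odd and $x_j\gtrdot x_{j+1}$ if $i$ is even. The shared elements are $s_i=x_{a_i}$, $i\in[t-1]$. $\mathcal J(F)$ is the set of order ideals. For $q\in F$, $I\in\mathcal J(F)$: $\chi_q(I)=1$ if $q\in\max(I)$, else $0$; $T_q(I)=1$ if $q\in\min(F\setminus I)$, $-1$ if $q\in\max(I)$, $0$ otherwise. For $f:\mathcal J(F)\to\mathbb R$, write $f\equiv\text{const}$ if $f=c+\sum_{q\in F}c_qT_q$ for some real constants $c,c_q$. The antichain toggleability space is $A_T(F)=\{f\in\operatorname{Span}_{\mathbb R}\{\chi_q:q\in F\}: f\equiv\text{const}\}$. *)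

theory Defs
  imports Main Complex_Main
begin

text \<open>A composition alpha = (alpha_1,...,alpha_t) is a list; alpha_i = alpha ! (i-1).
  Elements x_1,...,x_n of the fence are represented by the naturals 1..n.\<close>

definition fence_comp :: "nat list \<Rightarrow> bool" where
  "fence_comp \<alpha> \<longleftrightarrow> length \<alpha> \<ge> 2 \<and> (\<forall>k\<in>set \<alpha>. k > 0) \<and> hd \<alpha> \<ge> 2 \<and> last \<alpha> \<ge> 2"

definition apart :: "nat list \<Rightarrow> nat \<Rightarrow> nat" where
  "apart \<alpha> i = sum_list (take i \<alpha>)"

definition fsize :: "nat list \<Rightarrow> nat" where
  "fsize \<alpha> = apart \<alpha> (length \<alpha>) - 1"

definition fence_elems :: "nat list \<Rightarrow> nat set" where
  "fence_elems \<alpha> = {1..fsize \<alpha>}"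

definition odd_seg :: "nat list \<Rightarrow> nat \<Rightarrow> bool" where
  "odd_seg \<alpha> j \<longleftrightarrow> (\<exists>i. 1 \<le> i \<and> i \<le> length \<alpha> \<and> apart \<alpha> (i - 1) \<le> j \<and> j < apart \<alpha> i \<and> odd i)"

definition fence_covers :: "nat list \<Rightarrow> (nat \<times> nat) set" where
  "fence_covers \<alpha> =
     {(j, j + 1) | j. 1 \<le> j \<and> j \<le> fsize \<alpha> - 1 \<and> odd_seg \<alpha> j} \<union>
     {(j + 1, j) | j. 1 \<le> j \<and> j \<le> fsize \<alpha> - 1 \<and> \<not> odd_seg \<alpha> j}"

definition fence_le :: "nat list \<Rightarrow> nat \<Rightarrow> nat \<Rightarrow> bool" where
  "fence_le \<alpha> x y \<longleftrightarrow> x \<in> fence_elems \<alpha> \<and> y \<in> fence_elems \<alpha> \<and> (x, y) \<in> (fence_covers \<alpha>)\<^sup>*"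

definition fence_lt :: "nat list \<Rightarrow> nat \<Rightarrow> nat \<Rightarrow> bool" where
  "fence_lt \<alpha> x y \<longleftrightarrow> fence_le \<alpha> x y \<and> x \<noteq> y"

definition shared :: "nat list \<Rightarrow> nat \<Rightarrow> nat" where
  "shared \<alpha> i = apart \<alpha> i"

definition order_ideals :: "nat list \<Rightarrow> nat set set" where
  "order_ideals \<alpha> = {I. I \<subseteq> fence_elems \<alpha> \<and>
      (\<forall>x y. fence_le \<alpha> x y \<and> y \<in> I \<longrightarrow> x \<in> I)}"

definition is_max_in :: "nat list \<Rightarrow> nat \<Rightarrow> nat set \<Rightarrow> bool" where
  "is_max_in \<alpha> q S \<longleftrightarrow> q \<in> S \<and> \<not> (\<exists>y\<in>S. fence_lt \<alpha> q y)"

definition is_min_in :: "nat list \<Rightarrow> nat \<Rightarrow> nat set \<Rightarrow> bool" where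
  "is_min_in \<alpha> q S \<longleftrightarrow> q \<in> S \<and> \<not> (\<exists>y\<in>S. fence_lt \<alpha> y q)"

definition chi :: "nat list \<Rightarrow> nat \<Rightarrow> nat set \<Rightarrow> real" where
  "chi \<alpha> q I = (if is_max_in \<alpha> q I then 1 else 0)"

definition tog :: "nat list \<Rightarrow> nat \<Rightarrow> nat set \<Rightarrow> real" where
  "tog \<alpha> q I = (if is_min_in \<alpha> q (fence_elems \<alpha> - I) then 1
                 else if is_max_in \<alpha> q I then -1 else 0)"

text \<open>Functions J(F) -> R are represented by nat set => real, compared on order ideals only.\<close>
definition in_span_chi :: "nat list \<Rightarrow> (nat set \<Rightarrow> real) \<Rightarrow> bool" where
  "in_span_chi \<alpha> f \<longleftrightarrow> (\<exists>d :: nat \<Rightarrow> real. \<forall>I\<in>order_ideals \<alpha>.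
      f I = (\<Sum>q\<in>fence_elems \<alpha>. d q * chi \<alpha> q I))"

definition toggle_const :: "nat list \<Rightarrow> (nat set \<Rightarrow> real) \<Rightarrow> bool" where
  "toggle_const \<alpha> f \<longleftrightarrow> (\<exists>(c :: real) (cq :: nat \<Rightarrow> real). \<forall>I\<in>order_ideals \<alpha>.
      f I = c + (\<Sum>q\<in>fence_elems \<alpha>. cq q * tog \<alpha> q I))"

definition in_AT :: "nat list \<Rightarrow> (nat set \<Rightarrow> real) \<Rightarrow> bool" where
  "in_AT \<alpha> f \<longleftrightarrow> in_span_chi \<alpha> f \<and> toggle_const \<alpha> f"

end

theory Submission
  imports Defs
begin

lemma apart_Suc: "i < length xs \<Longrightarrow> apart xs (Suc i) = apart xs i + xs ! i"
  by (simp add: apart_def take_Suc_conv_app_nth)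

lemma apart_0[simp]: "apart xs 0 = 0" by (simp add: apart_def)

lemma apart_mono_strict:
  assumes "\<forall>k\<in>set xs. k > 0" "i < j" "j \<le> length xs"
  shows "apart xs i < apart xs j"
  using assms(2,3)
proof (induction j)
  case 0 then show ?case by simp
next
  case (Suc j)
  have "xs ! j > 0" using assms(1) Suc.prems by auto
  then have "apart xs j < apart xs (Suc j)" using apart_Suc[of j xs] Suc.prems by simp
  moreover have "apart xs i \<le> apart xs j"
    using Suc by (cases "i = j") auto
  ultimately show ?case by simp
qed

lemma apart_mono:
  assumes "\<forall>k\<in>set xs. k > 0" "i \<le> j" "j \<le> length xs"
  shows "apart xs i \<le> apart xs j"
  using apart_mono_strict[OF assms(1) _ assms(3), of i] assms(2) by (cases "i = j") auto

lemma seg: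
  assumes "\<forall>k\<in>set xs. k > 0" "1 \<le> i" "i \<le> length xs" "apart xs (i - 1) \<le> j" "j < apart xs i"
  shows "odd_seg xs j = odd i"
proof
  assume "odd_seg xs j"
  then obtain i' where i': "1 \<le> i'" "i' \<le> length xs" "apart xs (i' - 1) \<le> j" "j < apart xs i'" "odd i'"
    unfolding odd_seg_def by blast
  have "i' = i"
  proof (rule ccontr)
    assume "i' \<noteq> i"
    then consider "i' < i" | "i < i'" by linarith
    then show False
    proof cases
      case 1
      then have "apart xs i' \<le> apart xs (i - 1)" using apart_mono[OF assms(1), of i' "i-1"] assms by auto
      then show False using i' assms by linarith
    next
      case 2
      then have "apart xs i \<le> apart xs (i' - 1)" using apart_mono[OF assms(1), of i "i'-1"] i' by auto
      then show False using i' assms by linarith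
    qed
  qed
  then show "odd i" using i' by simp
next
  assume "odd i" then show "odd_seg xs j" unfolding odd_seg_def using assms by blast
qed


locale fence = fixes \<alpha> :: "nat list" assumes fc: "fence_comp \<alpha>"
begin

abbreviation "t \<equiv> length \<alpha>"
abbreviation "nn \<equiv> fsize \<alpha>"
abbreviation "FF \<equiv> fence_elems \<alpha>"
abbreviation "dr \<equiv> odd_seg \<alpha>"
abbreviation "ap \<equiv> apart \<alpha>"

lemma pos: "\<forall>k\<in>set \<alpha>. k > 0" using fc by (simp add: fence_comp_def)
lemma t2: "t \<ge> 2" using fc by (simp add: fence_comp_def)
lemma ne: "\<alpha> \<noteq> []" using t2 by auto
lemma first2: "\<alpha> ! 0 \<ge> 2" using fc ne by (simp add: fence_comp_def hd_conv_nth)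
lemma last2: "\<alpha> ! (t - 1) \<ge> 2" using fc ne by (simp add: fence_comp_def last_conv_nth)

lemma ap1: "ap 1 = \<alpha> ! 0" using apart_Suc[of 0 \<alpha>] ne by simp
lemma apt: "ap t = ap (t - 1) + \<alpha> ! (t - 1)"
proof -
  have "Suc (t - 1) = t" using t2 by simp
  then show ?thesis using apart_Suc[of "t - 1" \<alpha>] t2 by simp
qed
lemma nn_def': "nn = ap t - 1" by (simp add: fsize_def)
lemma ap1_le: "ap 1 \<le> ap (t - 1)" using apart_mono[OF pos, of 1 "t - 1"] t2 by simp
lemma nn3: "nn \<ge> 3" using nn_def' apt ap1_le ap1 first2 last2 by linarith
lemma FF_def': "FF = {1..nn}" by (simp add: fence_elems_def)

lemma dr0: "dr 0" using seg[OF pos, of 1 0] t2 ap1 first2 by simp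
lemma dr1: "dr 1" using seg[OF pos, of 1 1] t2 ap1 first2 by simp
lemma drn: "dr nn = dr (nn - 1)"
proof -
  have x: "ap (t - 1) \<le> nn - 1" "nn < ap t" using nn_def' apt last2 by arith+
  have a: "dr nn = odd t" using seg[OF pos, of t nn] t2 x by simp
  have b: "dr (nn - 1) = odd t" using seg[OF pos, of t "nn - 1"] t2 x by simp
  show ?thesis using a b by simp
qed

lemma shared_range:
  assumes "i \<in> {1..t - 1}" shows "2 \<le> ap i" "ap i \<le> nn - 1"
proof -
  have "ap 1 \<le> ap i" using apart_mono[OF pos, of 1 i] assms by auto
  then show "2 \<le> ap i" using ap1 first2 by linarith
  have "ap i \<le> ap (t - 1)" using apart_mono[OF pos, of i "t - 1"] assms by auto
  then show "ap i \<le> nn - 1" using nn_def' apt last2 by arith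
qed

lemma shared_ext:
  assumes "i \<in> {1..t - 1}" shows "dr (ap i - 1) \<noteq> dr (ap i)"
proof -
  have l: "ap (i - 1) < ap i" using apart_mono_strict[OF pos, of "i - 1" i] assms by auto
  have r: "ap i < ap (i + 1)" using apart_mono_strict[OF pos, of i "i + 1"] assms by auto
  have l': "ap (i - 1) \<le> ap i - 1" "ap i - 1 < ap i" using l by arith+
  have it: "1 \<le> i" "i \<le> t" using assms by auto
  have "dr (ap i - 1) = odd i" using seg[OF pos, of i "ap i - 1"] it l' by auto
  moreover have "dr (ap i) = odd (i + 1)" using seg[OF pos, of "i + 1" "ap i"] assms r by auto
  ultimately show ?thesis by simp
qed

lemma shared_inj: "inj_on ap {1..t - 1}"
proof (rule inj_onI)
  fix x y assume xy: "x \<in> {1..t - 1}" "y \<in> {1..t - 1}" "ap x = ap y"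
  show "x = y"
  proof (rule ccontr)
    assume "x \<noteq> y"
    then consider "x < y" | "y < x" by linarith
    then show False
    proof cases
      case 1 then show False using apart_mono_strict[OF pos, of x y] xy by (auto simp: le_diff_conv2)
    next
      case 2 then show False using apart_mono_strict[OF pos, of y x] xy by (auto simp: le_diff_conv2)
    qed
  qed
qed

end

context fence begin

lemma covers_iff: "(x, y) \<in> fence_covers \<alpha> \<longleftrightarrow>
   (y = x + 1 \<and> 1 \<le> x \<and> x \<le> nn - 1 \<and> dr x) \<or> (x = y + 1 \<and> 1 \<le> y \<and> y \<le> nn - 1 \<and> \<not> dr y)"
  unfolding fence_covers_def by auto

lemma covers_FF: "(x, y) \<in> fence_covers \<alpha> \<Longrightarrow> x \<in> FF \<and> y \<in> FF"
  unfolding covers_iff FF_def' using nn3 by auto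

lemma ideal_intro:
  assumes "I \<subseteq> FF"
    and "\<And>j. 1 \<le> j \<Longrightarrow> j \<le> nn - 1 \<Longrightarrow> (dr j \<longrightarrow> j + 1 \<in> I \<longrightarrow> j \<in> I) \<and> (\<not> dr j \<longrightarrow> j \<in> I \<longrightarrow> j + 1 \<in> I)"
  shows "I \<in> order_ideals \<alpha>"
proof -
  have "x \<in> I" if "(x, y) \<in> (fence_covers \<alpha>)\<^sup>*" "y \<in> I" for x y
    using that(1)
  proof (induction rule: converse_rtrancl_induct)
    case base then show ?case using that(2) .
  next
    case (step x z)
    then show ?case using assms(2)[of x] assms(2)[of z] unfolding covers_iff by auto
  qed
  then show ?thesis using assms(1) unfolding order_ideals_def fence_le_def by blast
qed

lemma ideal_sub: "I \<in> order_ideals \<alpha> \<Longrightarrow> I \<subseteq> FF"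
  unfolding order_ideals_def by auto

lemma ideal_down: "I \<in> order_ideals \<alpha> \<Longrightarrow> fence_le \<alpha> x y \<Longrightarrow> y \<in> I \<Longrightarrow> x \<in> I"
  unfolding order_ideals_def by auto

lemma max_iff:
  assumes I: "I \<in> order_ideals \<alpha>"
  shows "is_max_in \<alpha> q I \<longleftrightarrow> q \<in> I \<and> (\<forall>z. (q, z) \<in> fence_covers \<alpha> \<longrightarrow> z \<notin> I)"
proof
  assume m: "is_max_in \<alpha> q I"
  show "q \<in> I \<and> (\<forall>z. (q, z) \<in> fence_covers \<alpha> \<longrightarrow> z \<notin> I)"
  proof (intro conjI allI impI)
    show "q \<in> I" using m unfolding is_max_in_def by auto
    fix z assume c: "(q, z) \<in> fence_covers \<alpha>"
    show "z \<notin> I"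
    proof
      assume "z \<in> I"
      moreover have "fence_lt \<alpha> q z" using c covers_FF[OF c] unfolding fence_lt_def fence_le_def
        by (auto simp: covers_iff)
      ultimately show False using m unfolding is_max_in_def by auto
    qed
  qed
next
  assume h: "q \<in> I \<and> (\<forall>z. (q, z) \<in> fence_covers \<alpha> \<longrightarrow> z \<notin> I)"
  have "\<not> fence_lt \<alpha> q y" if "y \<in> I" for y
  proof
    assume "fence_lt \<alpha> q y"
    then have r: "(q, y) \<in> (fence_covers \<alpha>)\<^sup>*" "q \<noteq> y" and yF: "y \<in> FF"
      unfolding fence_lt_def fence_le_def by auto
    from r show False
    proof (cases rule: converse_rtranclE)
      case (step z)
      then have "fence_le \<alpha> z y" using covers_FF[of q z] yF unfolding fence_le_def by auto
      then have "z \<in> I" using ideal_down[OF I] that by blast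
      then show False using h step by auto
    qed simp
  qed
  then show "is_max_in \<alpha> q I" using h unfolding is_max_in_def by auto
qed

lemma min_iff:
  assumes I: "I \<in> order_ideals \<alpha>"
  shows "is_min_in \<alpha> q (FF - I) \<longleftrightarrow> q \<in> FF \<and> q \<notin> I \<and> (\<forall>z. (z, q) \<in> fence_covers \<alpha> \<longrightarrow> z \<in> I)"
proof
  assume m: "is_min_in \<alpha> q (FF - I)"
  show "q \<in> FF \<and> q \<notin> I \<and> (\<forall>z. (z, q) \<in> fence_covers \<alpha> \<longrightarrow> z \<in> I)"
  proof (intro conjI allI impI)
    show "q \<in> FF" "q \<notin> I" using m unfolding is_min_in_def by auto
    fix z assume c: "(z, q) \<in> fence_covers \<alpha>"
    show "z \<in> I"
    proof (rule ccontr)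
      assume "z \<notin> I"
      moreover have "fence_lt \<alpha> z q" using c covers_FF[OF c] unfolding fence_lt_def fence_le_def
        by (auto simp: covers_iff)
      ultimately show False using m covers_FF[OF c] unfolding is_min_in_def by auto
    qed
  qed
next
  assume h: "q \<in> FF \<and> q \<notin> I \<and> (\<forall>z. (z, q) \<in> fence_covers \<alpha> \<longrightarrow> z \<in> I)"
  have "\<not> fence_lt \<alpha> y q" if "y \<in> FF - I" for y
  proof
    assume "fence_lt \<alpha> y q"
    then have r: "(y, q) \<in> (fence_covers \<alpha>)\<^sup>*" "y \<noteq> q"
      unfolding fence_lt_def fence_le_def by auto
    from r show False
    proof (cases rule: rtranclE)
      case (step z)
      then have "fence_le \<alpha> y z" using covers_FF[of z q] that unfolding fence_le_def by auto
      moreover have "z \<in> I" using h step by auto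
      ultimately have "y \<in> I" using ideal_down[OF I] by blast
      then show False using that by auto
    qed simp
  qed
  then show "is_min_in \<alpha> q (FF - I)" using h unfolding is_min_in_def by auto
qed

definition maxc :: "nat set \<Rightarrow> nat \<Rightarrow> bool" where
  "maxc I q \<longleftrightarrow> q \<in> I \<and> (q + 1 \<le> nn \<and> dr q \<longrightarrow> q + 1 \<notin> I) \<and> (2 \<le> q \<and> \<not> dr (q - 1) \<longrightarrow> q - 1 \<notin> I)"

definition minc :: "nat set \<Rightarrow> nat \<Rightarrow> bool" where
  "minc I q \<longleftrightarrow> q \<notin> I \<and> (2 \<le> q \<and> dr (q - 1) \<longrightarrow> q - 1 \<in> I) \<and> (q + 1 \<le> nn \<and> \<not> dr q \<longrightarrow> q + 1 \<in> I)"

lemma cov_up: "1 \<le> q \<Longrightarrow> q \<le> nn \<Longrightarrow> (q, z) \<in> fence_covers \<alpha> \<longleftrightarrow>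
  (z = q + 1 \<and> q + 1 \<le> nn \<and> dr q) \<or> (z = q - 1 \<and> 2 \<le> q \<and> \<not> dr (q - 1))"
  unfolding covers_iff by (cases q) auto

lemma cov_low: "1 \<le> q \<Longrightarrow> q \<le> nn \<Longrightarrow> (z, q) \<in> fence_covers \<alpha> \<longleftrightarrow>
  (z = q - 1 \<and> 2 \<le> q \<and> dr (q - 1)) \<or> (z = q + 1 \<and> q + 1 \<le> nn \<and> \<not> dr q)"
  unfolding covers_iff by (cases q) auto

lemma max_maxc:
  assumes I: "I \<in> order_ideals \<alpha>" and q: "q \<in> FF"
  shows "is_max_in \<alpha> q I \<longleftrightarrow> maxc I q"
proof -
  have q1: "1 \<le> q" "q \<le> nn" using q FF_def' by auto
  have "(\<forall>z. (q, z) \<in> fence_covers \<alpha> \<longrightarrow> z \<notin> I) \<longleftrightarrow>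
        (q + 1 \<le> nn \<and> dr q \<longrightarrow> q + 1 \<notin> I) \<and> (2 \<le> q \<and> \<not> dr (q - 1) \<longrightarrow> q - 1 \<notin> I)"
    using q1 unfolding cov_up[OF q1] cov_low[OF q1] by auto
  then show ?thesis unfolding max_iff[OF I] maxc_def by blast
qed

lemma min_minc:
  assumes I: "I \<in> order_ideals \<alpha>" and q: "q \<in> FF"
  shows "is_min_in \<alpha> q (FF - I) \<longleftrightarrow> minc I q"
proof -
  have q1: "1 \<le> q" "q \<le> nn" using q FF_def' by auto
  have "(\<forall>z. (z, q) \<in> fence_covers \<alpha> \<longrightarrow> z \<in> I) \<longleftrightarrow>
        (2 \<le> q \<and> dr (q - 1) \<longrightarrow> q - 1 \<in> I) \<and> (q + 1 \<le> nn \<and> \<not> dr q \<longrightarrow> q + 1 \<in> I)"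
    using q1 unfolding cov_up[OF q1] cov_low[OF q1] by auto
  then show ?thesis unfolding min_iff[OF I] minc_def using q by blast
qed

lemma chi_eq: "I \<in> order_ideals \<alpha> \<Longrightarrow> q \<in> FF \<Longrightarrow> chi \<alpha> q I = (if maxc I q then 1 else 0)"
  unfolding chi_def using max_maxc by simp

lemma tog_eq: "I \<in> order_ideals \<alpha> \<Longrightarrow> q \<in> FF \<Longrightarrow>
   tog \<alpha> q I = (if minc I q then 1 else if maxc I q then -1 else 0)"
  unfolding tog_def using max_maxc min_minc by simp

end

lemma maxprin_pos:
  fixes g :: "nat \<Rightarrow> real"
  assumes g0: "g 0 = 0" and gN: "g (Suc N) = 0"
    and h: "\<And>q. 1 \<le> q \<Longrightarrow> q \<le> N \<Longrightarrow> g q = 0 \<or> 2 * g q = g (q - 1) + g (q + 1)"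
    and k: "k \<le> Suc N"
  shows "g k \<le> 0"
proof (rule ccontr)
  assume "\<not> g k \<le> 0"
  define M where "M = Max (g ` {0..Suc N})"
  have fin: "finite (g ` {0..Suc N})" by simp
  have Mge: "g i \<le> M" if "i \<le> Suc N" for i unfolding M_def using fin that by auto
  have "M \<in> g ` {0..Suc N}" unfolding M_def using fin by (intro Max_in) auto
  then obtain i where i: "i \<le> Suc N" "g i = M" by auto
  define k0 where "k0 = (LEAST i. i \<le> Suc N \<and> g i = M)"
  have k0: "k0 \<le> Suc N" "g k0 = M" unfolding k0_def using LeastI[of "\<lambda>i. i \<le> Suc N \<and> g i = M" i] i by auto
  have Mpos: "M > 0" using Mge[OF k] \<open>\<not> g k \<le> 0\<close> by linarith
  have "k0 \<noteq> 0"
  proof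
    assume "k0 = 0" then show False using k0(2) g0 Mpos by simp
  qed
  moreover have "k0 \<noteq> Suc N" using k0 gN Mpos by auto
  ultimately have r: "1 \<le> k0" "k0 \<le> N" using k0 by auto
  have "g (k0 - 1) \<noteq> M"
  proof
    assume "g (k0 - 1) = M"
    moreover have "k0 - 1 \<le> Suc N" using r by simp
    ultimately have "k0 \<le> k0 - 1" unfolding k0_def by (intro Least_le) auto
    then show False using r by auto
  qed
  moreover have "g (k0 - 1) \<le> M" using Mge[of "k0 - 1"] r by simp
  ultimately have a: "g (k0 - 1) < M" by linarith
  have b: "g (k0 + 1) \<le> M" using Mge[of "k0 + 1"] r by auto
  show False using h[OF r] a b k0 Mpos by auto
qed

lemma maxprin:
  fixes g :: "nat \<Rightarrow> real"
  assumes g0: "g 0 = 0" and gN: "g (Suc N) = 0"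
    and h: "\<And>q. 1 \<le> q \<Longrightarrow> q \<le> N \<Longrightarrow> g q = 0 \<or> 2 * g q = g (q - 1) + g (q + 1)"
    and k: "k \<le> Suc N"
  shows "g k = 0"
proof -
  have "g k \<le> 0" using maxprin_pos[of g N k] assms by blast
  moreover have "(\<lambda>x. - g x) k \<le> 0"
  proof (rule maxprin_pos[of _ N])
    fix q assume "1 \<le> q" "q \<le> N"
    then show "- g q = 0 \<or> 2 * - g q = - g (q - 1) + - g (q + 1)" using h[of q] by auto
  qed (use assms in auto)
  ultimately show ?thesis by simp
qed

context fence begin

definition hh :: "(nat \<Rightarrow> real) \<Rightarrow> (nat \<Rightarrow> real) \<Rightarrow> nat set \<Rightarrow> nat \<Rightarrow> real" where
  "hh D cq I r = D r * chi \<alpha> r I - cq r * tog \<alpha> r I"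

lemma loc:
  assumes "I \<in> order_ideals \<alpha>" "J \<in> order_ideals \<alpha>" "r \<in> FF"
    "r - 1 \<in> I \<longleftrightarrow> r - 1 \<in> J" "r \<in> I \<longleftrightarrow> r \<in> J" "r + 1 \<in> I \<longleftrightarrow> r + 1 \<in> J"
  shows "hh D cq I r = hh D cq J r"
  using assms unfolding hh_def by (simp add: chi_eq tog_eq maxc_def minc_def)

lemma hh_in:
  assumes "I \<in> order_ideals \<alpha>" "r \<in> FF" "r \<in> I"
  shows "hh D cq I r = (D r + cq r) * chi \<alpha> r I"
  using assms unfolding hh_def by (simp add: chi_eq tog_eq minc_def algebra_simps)

lemma hh_out:
  assumes "I \<in> order_ideals \<alpha>" "r \<in> FF" "r \<notin> I"
  shows "hh D cq I r = - cq r * tog \<alpha> r I"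
  using assms unfolding hh_def by (simp add: chi_eq maxc_def)

end

locale core = fence +
  fixes D cq :: "nat \<Rightarrow> real" and c :: real
  assumes hs: "\<And>I. I \<in> order_ideals \<alpha> \<Longrightarrow> (\<Sum>r\<in>FF. hh D cq I r) = c"
begin

abbreviation "h \<equiv> hh D cq"

lemma mixed:
  assumes I: "I0 \<in> order_ideals \<alpha>" "I1 \<in> order_ideals \<alpha>" "I2 \<in> order_ideals \<alpha>" "I3 \<in> order_ideals \<alpha>"
    and m: "m \<in> FF" "2 \<le> m"
    and a: "\<And>x. x \<noteq> m - 1 \<Longrightarrow> (x \<in> I0 \<longleftrightarrow> x \<in> I1) \<and> (x \<in> I2 \<longleftrightarrow> x \<in> I3)"
    and b: "\<And>x. x \<noteq> m + 1 \<Longrightarrow> (x \<in> I0 \<longleftrightarrow> x \<in> I2) \<and> (x \<in> I1 \<longleftrightarrow> x \<in> I3)"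
  shows "h I0 m - h I1 m - h I2 m + h I3 m = 0"
proof -
  define \<phi> where "\<phi> r = h I0 r - h I1 r - h I2 r + h I3 r" for r
  have "(\<Sum>r\<in>FF. \<phi> r) = c - c - c + c"
    unfolding \<phi>_def using hs[OF I(1)] hs[OF I(2)] hs[OF I(3)] hs[OF I(4)]
    by (simp add: sum.distrib sum_subtractf)
  then have s0: "(\<Sum>r\<in>FF. \<phi> r) = 0" by simp
  have z: "\<phi> r = 0" if "r \<in> FF" "r \<noteq> m" for r
  proof (cases "m - 1 \<noteq> r - 1 \<and> m - 1 \<noteq> r \<and> m - 1 \<noteq> r + 1")
    case True
    then have "h I0 r = h I1 r" "h I2 r = h I3 r"
      using loc[OF I(1) I(2) that(1)] loc[OF I(3) I(4) that(1)] a[of "r - 1"] a[of r] a[of "r + 1"] by metis+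
    then show ?thesis unfolding \<phi>_def by simp
  next
    case False
    then have "m + 1 \<noteq> r - 1 \<and> m + 1 \<noteq> r \<and> m + 1 \<noteq> r + 1" using that m by auto
    then have "h I0 r = h I2 r" "h I1 r = h I3 r"
      using loc[OF I(1) I(3) that(1)] loc[OF I(2) I(4) that(1)] b[of "r - 1"] b[of r] b[of "r + 1"] by metis+
    then show ?thesis unfolding \<phi>_def by simp
  qed
  have "(\<Sum>r\<in>FF. \<phi> r) = \<phi> m"
    using z m(1) by (subst sum.remove[of _ m]) (auto simp: FF_def')
  then show ?thesis using s0 unfolding \<phi>_def by simp
qed

lemma toggle:
  assumes I: "I \<in> order_ideals \<alpha>" "J \<in> order_ideals \<alpha>"
    and q: "1 \<le> q"
    and a: "\<And>x. x \<noteq> q \<Longrightarrow> (x \<in> I \<longleftrightarrow> x \<in> J)"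
  shows "(if q - 1 \<in> FF then h J (q - 1) - h I (q - 1) else 0)
       + (if q \<in> FF then h J q - h I q else 0)
       + (if q + 1 \<in> FF then h J (q + 1) - h I (q + 1) else 0) = 0"
proof -
  define \<psi> where "\<psi> r = (if r \<in> FF then h J r - h I r else 0)" for r
  have "(\<Sum>r\<in>FF. h J r - h I r) = c - c"
    using hs[OF I(1)] hs[OF I(2)] by (simp add: sum_subtractf)
  then have s0: "(\<Sum>r\<in>FF. \<psi> r) = 0" unfolding \<psi>_def by simp
  have z: "\<psi> r = 0" if "r \<notin> {q - 1, q, q + 1}" for r
  proof (cases "r \<in> FF")
    case True
    have "h I r = h J r" using loc[OF I True] a[of "r - 1"] a[of r] a[of "r + 1"] that q by auto
    then show ?thesis unfolding \<psi>_def by simp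
  qed (simp add: \<psi>_def)
  have fin: "finite FF" by (simp add: FF_def')
  have "(\<Sum>r\<in>FF. \<psi> r) = (\<Sum>r\<in>FF \<union> {q - 1, q, q + 1}. \<psi> r)"
    using fin by (intro sum.mono_neutral_left) (auto simp: \<psi>_def)
  also have "\<dots> = (\<Sum>r\<in>{q - 1, q, q + 1}. \<psi> r)"
    using fin z by (intro sum.mono_neutral_right) auto
  also have "\<dots> = \<psi> (q - 1) + \<psi> q + \<psi> (q + 1)"
  proof -
    have d: "q - 1 \<noteq> q" "q - 1 \<noteq> q + 1" "q \<noteq> q + 1" using q by auto
    then show ?thesis by (simp add: d)
  qed
  finally show ?thesis using s0 unfolding \<psi>_def by simp
qed

end

lemma near4: "(m::nat) \<le> j + 2 \<Longrightarrow> j \<le> m + 1 \<Longrightarrow> j = m - 2 \<or> j = m - 1 \<or> j = m \<or> j = m + 1"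
  by arith

context fence begin

definition SS :: "nat \<Rightarrow> (nat \<Rightarrow> bool) \<Rightarrow> nat set" where
  "SS m P = {x \<in> FF. (x + 2 \<le> m \<and> dr (m - 2)) \<or> (m + 2 \<le> x \<and> \<not> dr (m + 1)) \<or> P x}"

lemma SS_ideal:
  assumes P: "\<And>x. P x \<Longrightarrow> m \<le> x + 1 \<and> x \<le> m + 1"
    and near: "\<And>j. 1 \<le> j \<Longrightarrow> j \<le> nn - 1 \<Longrightarrow> m \<le> j + 2 \<Longrightarrow> j \<le> m + 1 \<Longrightarrow>
      (dr j \<longrightarrow> j + 1 \<in> SS m P \<longrightarrow> j \<in> SS m P) \<and> (\<not> dr j \<longrightarrow> j \<in> SS m P \<longrightarrow> j + 1 \<in> SS m P)"
  shows "SS m P \<in> order_ideals \<alpha>"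
proof (rule ideal_intro)
  show "SS m P \<subseteq> FF" by (auto simp: SS_def)
  fix j assume j: "1 \<le> j" "j \<le> nn - 1"
  show "(dr j \<longrightarrow> j + 1 \<in> SS m P \<longrightarrow> j \<in> SS m P) \<and> (\<not> dr j \<longrightarrow> j \<in> SS m P \<longrightarrow> j + 1 \<in> SS m P)"
  proof (cases "m \<le> j + 2 \<and> j \<le> m + 1")
    case True then show ?thesis using near j by blast
  next
    case False
    have F: "j \<in> FF" "j + 1 \<in> FF" using j nn3 by (auto simp: FF_def')
    have nP: "\<not> P j" "\<not> P (j + 1)" using P False by force+
    from False consider "j + 2 < m" | "m + 1 < j" by linarith
    then show ?thesis
    proof cases
      case 1
      then have "j \<in> SS m P \<longleftrightarrow> dr (m - 2)" "j + 1 \<in> SS m P \<longleftrightarrow> dr (m - 2)"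
        using F nP unfolding SS_def by auto
      then show ?thesis by simp
    next
      case 2
      then have "j \<in> SS m P \<longleftrightarrow> \<not> dr (m + 1)" "j + 1 \<in> SS m P \<longleftrightarrow> \<not> dr (m + 1)"
        using F nP unfolding SS_def by auto
      then show ?thesis by simp
    qed
  qed
qed

lemma ext_range:
  assumes "p \<in> FF" "dr (p - 1) \<noteq> dr p"
  shows "2 \<le> p" "p + 1 \<le> nn"
proof -
  have "p \<noteq> 1" using assms dr0 dr1 by auto
  then show "2 \<le> p" using assms by (auto simp: FF_def')
  have "p \<noteq> nn" using assms drn by auto
  then show "p + 1 \<le> nn" using assms by (auto simp: FF_def')
qed

end

context core begin

lemma E1:
  assumes pF: "p \<in> FF" and d1: "dr (p - 1)" and d2: "\<not> dr p"
  shows "cq p = 0"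
proof -
  have r: "2 \<le> p" "p + 1 \<le> nn" using ext_range[OF pF] d1 d2 by auto
  then obtain k where pk: "p = Suc (Suc k)" using nat_le_iff_add by (metis add_2_eq_Suc)
  define I0 where "I0 = SS p (\<lambda>x. False)"
  define I1 where "I1 = SS p (\<lambda>x. x = Suc k)"
  define I2 where "I2 = SS p (\<lambda>x. x = p + 1)"
  define I3 where "I3 = SS p (\<lambda>x. x = Suc k \<or> x = p + 1)"
  have "I0 \<in> order_ideals \<alpha>" unfolding I0_def
    by (rule SS_ideal) (use d1 d2 r in \<open>auto simp: SS_def FF_def' pk dest!: near4\<close>)
  moreover have "I1 \<in> order_ideals \<alpha>" unfolding I1_def
    by (rule SS_ideal) (use d1 d2 r in \<open>auto simp: SS_def FF_def' pk dest!: near4\<close>)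
  moreover have "I2 \<in> order_ideals \<alpha>" unfolding I2_def
    by (rule SS_ideal) (use d1 d2 r in \<open>auto simp: SS_def FF_def' pk dest!: near4\<close>)
  moreover have "I3 \<in> order_ideals \<alpha>" unfolding I3_def
    by (rule SS_ideal) (use d1 d2 r in \<open>auto simp: SS_def FF_def' pk dest!: near4\<close>)
  ultimately have id: "I0 \<in> order_ideals \<alpha>" "I1 \<in> order_ideals \<alpha>" "I2 \<in> order_ideals \<alpha>" "I3 \<in> order_ideals \<alpha>"
    by auto
  have "h I0 p - h I1 p - h I2 p + h I3 p = 0"
    by (rule mixed[OF id pF r(1)]) (auto simp: I0_def I1_def I2_def I3_def SS_def pk)
  moreover have "h I0 p = 0" "h I1 p = 0" "h I2 p = 0" "h I3 p = - cq p"
    using id pF d1 d2 r unfolding hh_def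
    by (simp_all add: chi_eq tog_eq maxc_def minc_def I0_def I1_def I2_def I3_def SS_def pk FF_def')
  ultimately show ?thesis by simp
qed

lemma E2:
  assumes pF: "p \<in> FF" and d1: "\<not> dr (p - 1)" and d2: "dr p"
  shows "cq p + D p = 0"
proof -
  have r: "2 \<le> p" "p + 1 \<le> nn" using ext_range[OF pF] d1 d2 by auto
  then obtain k where pk: "p = Suc (Suc k)" using nat_le_iff_add by (metis add_2_eq_Suc)
  define I0 where "I0 = SS p (\<lambda>x. x = p)"
  define I1 where "I1 = SS p (\<lambda>x. x = p \<or> x = Suc k)"
  define I2 where "I2 = SS p (\<lambda>x. x = p \<or> x = p + 1)"
  define I3 where "I3 = SS p (\<lambda>x. x = p \<or> x = Suc k \<or> x = p + 1)"
  have "I0 \<in> order_ideals \<alpha>" unfolding I0_def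
    by (rule SS_ideal) (use d1 d2 r in \<open>auto simp: SS_def FF_def' pk dest!: near4\<close>)
  moreover have "I1 \<in> order_ideals \<alpha>" unfolding I1_def
    by (rule SS_ideal) (use d1 d2 r in \<open>auto simp: SS_def FF_def' pk dest!: near4\<close>)
  moreover have "I2 \<in> order_ideals \<alpha>" unfolding I2_def
    by (rule SS_ideal) (use d1 d2 r in \<open>auto simp: SS_def FF_def' pk dest!: near4\<close>)
  moreover have "I3 \<in> order_ideals \<alpha>" unfolding I3_def
    by (rule SS_ideal) (use d1 d2 r in \<open>auto simp: SS_def FF_def' pk dest!: near4\<close>)
  ultimately have id: "I0 \<in> order_ideals \<alpha>" "I1 \<in> order_ideals \<alpha>" "I2 \<in> order_ideals \<alpha>" "I3 \<in> order_ideals \<alpha>"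
    by auto
  have "h I0 p - h I1 p - h I2 p + h I3 p = 0"
    by (rule mixed[OF id pF r(1)]) (auto simp: I0_def I1_def I2_def I3_def SS_def pk)
  moreover have "h I0 p = D p + cq p" "h I1 p = 0" "h I2 p = 0" "h I3 p = 0"
    using id pF d1 d2 r unfolding hh_def
    by (simp_all add: chi_eq tog_eq maxc_def minc_def I0_def I1_def I2_def I3_def SS_def pk FF_def')
  ultimately show ?thesis by simp
qed

lemma E3:
  assumes qF: "q \<in> FF" and d1: "dr (q - 1)" and d2: "dr q"
  shows "D q + 2 * cq q = (if q + 1 \<in> FF then cq (q + 1) else 0) + (if q - 1 \<in> FF then cq (q - 1) + D (q - 1) else 0)"
proof -
  have q1: "1 \<le> q" "q \<le> nn" using qF by (auto simp: FF_def')
  then obtain k where qk: "q = Suc k" using Suc_le_D by auto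
  define I where "I = SS q (\<lambda>x. x = k)"
  define J where "J = SS q (\<lambda>x. x = k \<or> x = q)"
  have I: "I \<in> order_ideals \<alpha>" unfolding I_def
    by (rule SS_ideal) (use d1 d2 q1 in \<open>auto simp: SS_def FF_def' qk dest!: near4\<close>)
  have J: "J \<in> order_ideals \<alpha>" unfolding J_def
    by (rule SS_ideal) (use d1 d2 q1 in \<open>auto simp: SS_def FF_def' qk dest!: near4\<close>)
  have T: "(if q - 1 \<in> FF then h J (q - 1) - h I (q - 1) else 0)
       + (if q \<in> FF then h J q - h I q else 0)
       + (if q + 1 \<in> FF then h J (q + 1) - h I (q + 1) else 0) = 0"
    by (rule toggle[OF I J q1(1)]) (auto simp: I_def J_def SS_def)
  have a: "(if q \<in> FF then h J q - h I q else 0) = D q + 2 * cq q"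
    using I J qF d1 d2 q1 unfolding hh_def
    by (simp add: chi_eq tog_eq maxc_def minc_def I_def J_def SS_def qk FF_def')
  have b: "(if q + 1 \<in> FF then h J (q + 1) - h I (q + 1) else 0) = - (if q + 1 \<in> FF then cq (q + 1) else 0)"
  proof (cases "q + 1 \<in> FF")
    case True
    then show ?thesis using I J d1 d2 q1 unfolding hh_def
      by (simp add: chi_eq tog_eq maxc_def minc_def I_def J_def SS_def qk FF_def')
  qed simp
  have c: "(if q - 1 \<in> FF then h J (q - 1) - h I (q - 1) else 0) = - (if q - 1 \<in> FF then cq (q - 1) + D (q - 1) else 0)"
  proof (cases "q - 1 \<in> FF")
    case True
    then obtain j where kj: "k = Suc j" using qk by (cases k) (auto simp: FF_def')
    show ?thesis using True I J d1 d2 q1 unfolding hh_def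
      by (simp add: chi_eq tog_eq maxc_def minc_def I_def J_def SS_def qk kj FF_def' algebra_simps)
  qed simp
  show ?thesis using T a b c by linarith
qed

lemma E4:
  assumes qF: "q \<in> FF" and d1: "\<not> dr (q - 1)" and d2: "\<not> dr q"
  shows "D q + 2 * cq q = (if q - 1 \<in> FF then cq (q - 1) else 0) + (if q + 1 \<in> FF then cq (q + 1) + D (q + 1) else 0)"
proof -
  have q1: "1 \<le> q" "q \<le> nn" using qF by (auto simp: FF_def')
  then obtain k where qk: "q = Suc k" using Suc_le_D by auto
  define I where "I = SS q (\<lambda>x. x = q + 1)"
  define J where "J = SS q (\<lambda>x. x = q + 1 \<or> x = q)"
  have I: "I \<in> order_ideals \<alpha>" unfolding I_def
    by (rule SS_ideal) (use d1 d2 q1 in \<open>auto simp: SS_def FF_def' qk dest!: near4\<close>)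
  have J: "J \<in> order_ideals \<alpha>" unfolding J_def
    by (rule SS_ideal) (use d1 d2 q1 in \<open>auto simp: SS_def FF_def' qk dest!: near4\<close>)
  have T: "(if q - 1 \<in> FF then h J (q - 1) - h I (q - 1) else 0)
       + (if q \<in> FF then h J q - h I q else 0)
       + (if q + 1 \<in> FF then h J (q + 1) - h I (q + 1) else 0) = 0"
    by (rule toggle[OF I J q1(1)]) (auto simp: I_def J_def SS_def)
  have a: "(if q \<in> FF then h J q - h I q else 0) = D q + 2 * cq q"
    using I J qF d1 d2 q1 unfolding hh_def
    by (simp add: chi_eq tog_eq maxc_def minc_def I_def J_def SS_def qk FF_def')
  have b: "(if q + 1 \<in> FF then h J (q + 1) - h I (q + 1) else 0) = - (if q + 1 \<in> FF then cq (q + 1) + D (q + 1) else 0)"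
  proof (cases "q + 1 \<in> FF")
    case True
    then show ?thesis using I J d1 d2 q1 unfolding hh_def
      by (simp add: chi_eq tog_eq maxc_def minc_def I_def J_def SS_def qk FF_def' algebra_simps)
  qed simp
  have c: "(if q - 1 \<in> FF then h J (q - 1) - h I (q - 1) else 0) = - (if q - 1 \<in> FF then cq (q - 1) else 0)"
  proof (cases "q - 1 \<in> FF")
    case True
    then obtain j where kj: "k = Suc j" using qk by (cases k) (auto simp: FF_def')
    show ?thesis using True I J d1 d2 q1 unfolding hh_def
      by (simp add: chi_eq tog_eq maxc_def minc_def I_def J_def SS_def qk kj FF_def')
  qed simp
  show ?thesis using T a b c by linarith
qed

lemma E7:
  assumes pF: "p \<in> FF" and d1: "dr (p - 1)" and d2: "\<not> dr p"
    and z1: "cq (p - 1) + D (p - 1) = 0" and z2: "cq (p + 1) + D (p + 1) = 0"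
  shows "D p + 2 * cq p = 0"
proof -
  have r: "2 \<le> p" "p + 1 \<le> nn" using ext_range[OF pF] d1 d2 by auto
  have p1: "1 \<le> p" using r by simp
  obtain k where pk: "p = Suc (Suc k)" using r nat_le_iff_add by (metis add_2_eq_Suc)
  define I where "I = FF - {p}"
  have I: "I \<in> order_ideals \<alpha>" unfolding I_def
    by (rule ideal_intro) (use d1 d2 in \<open>auto simp: FF_def'\<close>)
  have J: "FF \<in> order_ideals \<alpha>"
    by (rule ideal_intro) (auto simp: FF_def')
  have T: "(if p - 1 \<in> FF then h FF (p - 1) - h I (p - 1) else 0)
       + (if p \<in> FF then h FF p - h I p else 0)
       + (if p + 1 \<in> FF then h FF (p + 1) - h I (p + 1) else 0) = 0"
    by (rule toggle[OF I J p1]) (auto simp: I_def)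
  have F: "p - 1 \<in> FF" "p + 1 \<in> FF" using r by (auto simp: FF_def')
  have b: "h FF (p - 1) = 0" "h I (p - 1) = 0" "h FF (p + 1) = 0" "h I (p + 1) = 0"
    using hh_in[OF J F(1)] hh_in[OF I F(1)] hh_in[OF J F(2)] hh_in[OF I F(2)] z1 z2 F r
    by (auto simp: I_def)
  have a: "h FF p - h I p = D p + 2 * cq p"
    using I J pF d1 d2 r unfolding hh_def
    by (simp add: chi_eq tog_eq maxc_def minc_def I_def FF_def' pk)
  show ?thesis using T a b F pF by simp
qed

lemma E8:
  assumes pF: "p \<in> FF" and d1: "\<not> dr (p - 1)" and d2: "dr p"
    and z1: "cq (p - 1) = 0" and z2: "cq (p + 1) = 0"
  shows "D p + 2 * cq p = 0"
proof -
  have r: "2 \<le> p" "p + 1 \<le> nn" using ext_range[OF pF] d1 d2 by auto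
  have p1: "1 \<le> p" using r by simp
  obtain k where pk: "p = Suc (Suc k)" using r nat_le_iff_add by (metis add_2_eq_Suc)
  have I: "{} \<in> order_ideals \<alpha>"
    by (rule ideal_intro) auto
  have J: "{p} \<in> order_ideals \<alpha>"
    by (rule ideal_intro) (use d1 d2 pF in \<open>auto simp: FF_def'\<close>)
  have T: "(if p - 1 \<in> FF then h {p} (p - 1) - h {} (p - 1) else 0)
       + (if p \<in> FF then h {p} p - h {} p else 0)
       + (if p + 1 \<in> FF then h {p} (p + 1) - h {} (p + 1) else 0) = 0"
    by (rule toggle[OF I J p1]) auto
  have F: "p - 1 \<in> FF" "p + 1 \<in> FF" using r by (auto simp: FF_def')
  have b: "h {p} (p - 1) = 0" "h {} (p - 1) = 0" "h {p} (p + 1) = 0" "h {} (p + 1) = 0"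
    using hh_out[OF J F(1)] hh_out[OF I F(1)] hh_out[OF J F(2)] hh_out[OF I F(2)] z1 z2 F r
    by auto
  have a: "h {p} p - h {} p = D p + 2 * cq p"
    using I J pF d1 d2 r unfolding hh_def
    by (simp add: chi_eq tog_eq maxc_def minc_def FF_def' pk)
  show ?thesis using T a b F pF by simp
qed

end

context core begin

lemma D_zero:
  assumes Dz: "\<And>q. q \<in> FF \<Longrightarrow> dr (q - 1) = dr q \<Longrightarrow> D q = 0"
    and qF: "q \<in> FF"
  shows "D q = 0"
proof -
  define g where "g r = (if r \<in> FF then (if dr (r - 1) \<and> \<not> dr r then cq r else cq r + D r) else 0)" for r
  have FFi: "r \<in> FF \<longleftrightarrow> 1 \<le> r \<and> r \<le> nn" for r by (simp add: FF_def')
  have g0: "g r = 0" if "r \<le> Suc nn" for r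
  proof (rule maxprin[of g nn r])
    show "g 0 = 0" "g (Suc nn) = 0" by (auto simp: g_def FFi)
    show "r \<le> Suc nn" by fact
    fix q assume q: "1 \<le> q" "q \<le> nn"
    then have qF: "q \<in> FF" by (simp add: FFi)
    consider (pk) "dr (q - 1)" "\<not> dr q" | (vl) "\<not> dr (q - 1)" "dr q" | (up) "dr (q - 1)" "dr q"
      | (dn) "\<not> dr (q - 1)" "\<not> dr q" by blast
    then show "g q = 0 \<or> 2 * g q = g (q - 1) + g (q + 1)"
    proof cases
      case pk then show ?thesis using E1[OF qF] by (simp add: g_def qF)
    next
      case vl then show ?thesis using E2[OF qF] by (simp add: g_def qF)
    next
      case up
      have Dq: "D q = 0" using Dz[OF qF] up by simp
      have a: "g (q + 1) = (if q + 1 \<in> FF then cq (q + 1) else 0)"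
        using Dz[of "q + 1"] up by (auto simp: g_def)
      have b: "g (q - 1) = (if q - 1 \<in> FF then cq (q - 1) + D (q - 1) else 0)"
        using up by (auto simp: g_def)
      have "g q = cq q" using Dq qF by (simp add: g_def)
      then show ?thesis using E3[OF qF up] a b Dq by simp
    next
      case dn
      have Dq: "D q = 0" using Dz[OF qF] dn by simp
      have a: "g (q - 1) = (if q - 1 \<in> FF then cq (q - 1) else 0)"
        using Dz[of "q - 1"] dn by (auto simp: g_def)
      have b: "g (q + 1) = (if q + 1 \<in> FF then cq (q + 1) + D (q + 1) else 0)"
        using dn by (auto simp: g_def)
      have "g q = cq q" using Dq qF by (simp add: g_def)
      then show ?thesis using E4[OF qF dn] a b Dq by simp
    qed
  qed
  consider (eq) "dr (q - 1) = dr q" | (pk) "dr (q - 1)" "\<not> dr q" | (vl) "\<not> dr (q - 1)" "dr q" by blast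
  then show ?thesis
  proof cases
    case eq then show ?thesis using Dz[OF qF] by simp
  next
    case pk
    have r: "2 \<le> q" "q + 1 \<le> nn" using ext_range[OF qF] pk by auto
    have F: "q - 1 \<in> FF" "q + 1 \<in> FF" using r by (auto simp: FFi)
    have z1: "cq (q - 1) + D (q - 1) = 0" using g0[of "q - 1"] F pk r by (auto simp: g_def)
    have z2: "cq (q + 1) + D (q + 1) = 0" using g0[of "q + 1"] F pk r by (auto simp: g_def)
    have "cq q = 0" using g0[of q] qF pk r by (auto simp: g_def)
    then show ?thesis using E7[OF qF pk z1 z2] by simp
  next
    case vl
    have r: "2 \<le> q" "q + 1 \<le> nn" using ext_range[OF qF] vl by auto
    have F: "q - 1 \<in> FF" "q + 1 \<in> FF" using r by (auto simp: FFi)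
    have z1: "cq (q - 1) = 0"
    proof (cases "dr (q - 1 - 1)")
      case True then show ?thesis using g0[of "q - 1"] F vl r by (auto simp: g_def)
    next
      case False then show ?thesis using g0[of "q - 1"] F vl r Dz[OF F(1)] by (auto simp: g_def)
    qed
    have z2: "cq (q + 1) = 0"
    proof (cases "dr (q + 1)")
      case False then show ?thesis using g0[of "q + 1"] F vl r by (auto simp: g_def)
    next
      case True then show ?thesis using g0[of "q + 1"] F vl r Dz[OF F(2)] by (auto simp: g_def)
    qed
    have "cq q + D q = 0" using g0[of q] qF vl r by (auto simp: g_def)
    then show ?thesis using E8[OF qF vl z1 z2] by simp
  qed
qed

end

context fence begin

lemma key:
  assumes h: "\<forall>I\<in>order_ideals \<alpha>. (\<Sum>i\<in>{1..t - 1}. d i * chi \<alpha> (ap i) I) = c + (\<Sum>q\<in>FF. cq q * tog \<alpha> q I)"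
  shows "\<forall>i\<in>{1..t - 1}. d i = 0"
proof -
  define A where "A = {1..t - 1}"
  define D where "D x = (if x \<in> ap ` A then d (the_inv_into A ap x) else 0)" for x
  have inj: "inj_on ap A" using shared_inj by (simp add: A_def)
  have Dap: "D (ap i) = d i" if "i \<in> A" for i
    using that the_inv_into_f_f[OF inj that] by (simp add: D_def)
  have sub: "ap ` A \<subseteq> FF" using shared_range by (force simp: A_def FF_def')
  have eqs: "(\<Sum>i\<in>A. d i * chi \<alpha> (ap i) I) = (\<Sum>x\<in>FF. D x * chi \<alpha> x I)" for I
  proof -
    have "(\<Sum>i\<in>A. d i * chi \<alpha> (ap i) I) = (\<Sum>i\<in>A. D (ap i) * chi \<alpha> (ap i) I)"
      using Dap by simp
    also have "\<dots> = (\<Sum>x\<in>ap ` A. D x * chi \<alpha> x I)"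
      using sum.reindex[OF inj, of "\<lambda>x. D x * chi \<alpha> x I"] by simp
    also have "\<dots> = (\<Sum>x\<in>FF. D x * chi \<alpha> x I)"
      using sub by (intro sum.mono_neutral_left) (auto simp: D_def FF_def')
    finally show ?thesis .
  qed
  interpret core \<alpha> D cq c
  proof
    fix I assume I: "I \<in> order_ideals \<alpha>"
    have "(\<Sum>r\<in>FF. hh D cq I r) = (\<Sum>x\<in>FF. D x * chi \<alpha> x I) - (\<Sum>q\<in>FF. cq q * tog \<alpha> q I)"
      unfolding hh_def by (simp add: sum_subtractf)
    then show "(\<Sum>r\<in>FF. hh D cq I r) = c" using h I eqs by (simp add: A_def)
  qed
  have Dz: "D q = 0" if "q \<in> FF" "dr (q - 1) = dr q" for q
  proof -
    have "q \<notin> ap ` A" using shared_ext that(2) by (auto simp: A_def)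
    then show ?thesis by (simp add: D_def)
  qed
  show ?thesis
  proof
    fix i assume i: "i \<in> {1..t - 1}"
    have "ap i \<in> FF" using sub i by (auto simp: A_def)
    then have "D (ap i) = 0" using D_zero Dz by blast
    then show "d i = 0" using Dap i by (simp add: A_def)
  qed
qed

end

theorem lemma3p4:
  fixes \<alpha> :: "nat list"
  assumes "fence_comp \<alpha>"
  shows "(\<forall>d :: nat \<Rightarrow> real.
            (\<forall>I\<in>order_ideals \<alpha>. (\<Sum>i\<in>{1..length \<alpha> - 1}. d i * chi \<alpha> (shared \<alpha> i) I) = 0)
            \<longrightarrow> (\<forall>i\<in>{1..length \<alpha> - 1}. d i = 0))
       \<and> (\<forall>f :: nat set \<Rightarrow> real.
            (\<exists>d :: nat \<Rightarrow> real. \<forall>I\<in>order_ideals \<alpha>.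
                f I = (\<Sum>i\<in>{1..length \<alpha> - 1}. d i * chi \<alpha> (shared \<alpha> i) I))
            \<and> in_AT \<alpha> f
            \<longrightarrow> (\<forall>I\<in>order_ideals \<alpha>. f I = 0))"
proof -
  interpret fence \<alpha> by (rule fence.intro) (rule assms)
  have sh: "shared \<alpha> = ap" by (simp add: fun_eq_iff shared_def)
  show ?thesis
  proof (intro conjI allI impI)
    fix d :: "nat \<Rightarrow> real"
    assume h: "\<forall>I\<in>order_ideals \<alpha>. (\<Sum>i\<in>{1..length \<alpha> - 1}. d i * chi \<alpha> (shared \<alpha> i) I) = 0"
    show "\<forall>i\<in>{1..length \<alpha> - 1}. d i = 0"
      by (rule key[of d 0 "\<lambda>_. 0"]) (use h in \<open>simp add: sh\<close>)
  next
    fix f :: "nat set \<Rightarrow> real"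
    assume h: "(\<exists>d :: nat \<Rightarrow> real. \<forall>I\<in>order_ideals \<alpha>.
                f I = (\<Sum>i\<in>{1..length \<alpha> - 1}. d i * chi \<alpha> (shared \<alpha> i) I)) \<and> in_AT \<alpha> f"
    then obtain d where d: "\<forall>I\<in>order_ideals \<alpha>. f I = (\<Sum>i\<in>{1..length \<alpha> - 1}. d i * chi \<alpha> (shared \<alpha> i) I)"
      by blast
    from h obtain c cq where c: "\<forall>I\<in>order_ideals \<alpha>. f I = c + (\<Sum>q\<in>fence_elems \<alpha>. cq q * tog \<alpha> q I)"
      unfolding in_AT_def toggle_const_def by blast
    have "\<forall>i\<in>{1..length \<alpha> - 1}. d i = 0"
      by (rule key[of d c cq]) (use d c in \<open>simp add: sh\<close>)
    then show "\<forall>I\<in>order_ideals \<alpha>. f I = 0" using d by simp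
  qed
qed

end
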